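(* Let $\mathcal M\subset \mathcal M_n(\mathbb R)$ be a compact convex set of irreducible Metzler matrices. Then $\lambda(\mathcal M)\ge\lambda(m)$ for every $m\in\mathcal M$, where $\lambda(m)$ is the Perron (dominant) eigenvalue of $m$.
   Context: A matrix is Metzler if its off-diagonal entries are nonnegative; it is irreducible if for every partition $\{1,\dots,n\}=I\sqcup J$ into nonempty sets some $m_{ij}$ with $i\in I$, $j\in J$ is positive. $K$ is the nonnegative orthant, $K_0=K\setminus\{0\}$. For $t>0$, $L^\infty(0,t)$ is the set of measurable controls $M:[0,t]\to\mathcal M$ and $x_M$ solves $\dot x_M=M(s)x_M$, $x_M(0)=x$. $\lambda(\mathcal M)$ is the unique real number for which there exists $\overline v:K\to\mathbb R_+$, homogeneous of degree 1, positive on $K_0$, globally Lipschitz, with $e^{\lambda(\mathcal M)t}\overline v(x)=\sup_{M\in L^\infty(0,t)}\overline v(x_M(t))$ for all $t\ge0$, $x\in K$. *)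

theory Defs
  imports "HOL-Analysis.Analysis"
begin

definition metzler :: "real^'n^'n \<Rightarrow> bool" where
  "metzler m \<longleftrightarrow> (\<forall>i j. i \<noteq> j \<longrightarrow> 0 \<le> m $ i $ j)"

definition irreducible_mat :: "real^'n^'n \<Rightarrow> bool" where
  "irreducible_mat m \<longleftrightarrow>
     (\<forall>I J. I \<noteq> {} \<longrightarrow> J \<noteq> {} \<longrightarrow> I \<inter> J = {} \<longrightarrow> I \<union> J = UNIV \<longrightarrow>
        (\<exists>i\<in>I. \<exists>j\<in>J. 0 < m $ i $ j))"

definition orthant :: "(real^'n) set" where
  "orthant = {x. \<forall>i. 0 \<le> x $ i}"

definition cmat :: "real^'n^'n \<Rightarrow> complex^'n^'n" where
  "cmat m = (\<chi> i j. complex_of_real (m $ i $ j))"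

definition is_eigenvalue :: "real^'n^'n \<Rightarrow> complex \<Rightarrow> bool" where
  "is_eigenvalue m \<mu> \<longleftrightarrow> (\<exists>v::complex^'n. v \<noteq> 0 \<and> cmat m *v v = \<mu> *s v)"

definition perron_root :: "real^'n^'n \<Rightarrow> real" where
  "perron_root m = (THE r. is_eigenvalue m (complex_of_real r) \<and>
                           (\<forall>\<mu>. is_eigenvalue m \<mu> \<longrightarrow> Re \<mu> \<le> r))"

text \<open>Admissible pair (control, trajectory) on [0,t]: a measurable control with values
  in Ms, and an (absolutely continuous, Caratheodory) solution of
  x' = M(s) x, x(0) = x0, written in integral form.\<close>
definition admissible ::
  "(real^'n^'n) set \<Rightarrow> real \<Rightarrow> real^'n \<Rightarrow> (real \<Rightarrow> real^'n^'n) \<Rightarrow> (real \<Rightarrow> real^'n) \<Rightarrow> bool" where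
  "admissible Ms t x0 M y \<longleftrightarrow>
     M measurable_on {0..t} \<and> (\<forall>s\<in>{0..t}. M s \<in> Ms) \<and>
     continuous_on {0..t} y \<and>
     (\<forall>s\<in>{0..t}. ((\<lambda>\<tau>. M \<tau> *v y \<tau>) has_integral (y s - x0)) {0..s})"

definition lambda_witness :: "(real^'n^'n) set \<Rightarrow> real \<Rightarrow> (real^'n \<Rightarrow> real) \<Rightarrow> bool" where
  "lambda_witness Ms l v \<longleftrightarrow>
     (\<forall>x\<in>orthant. 0 \<le> v x) \<and>
     (\<forall>x\<in>orthant. \<forall>c\<ge>0. v (c *\<^sub>R x) = c * v x) \<and>
     (\<forall>x\<in>orthant - {0}. 0 < v x) \<and>
     (\<exists>L. \<forall>x\<in>orthant. \<forall>y\<in>orthant. \<bar>v x - v y\<bar> \<le> L * norm (x - y)) \<and>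
     (\<forall>t\<ge>0. \<forall>x\<in>orthant.
        exp (l * t) * v x = (SUP p \<in> {(M, y). admissible Ms t x M y}. v (snd p t)))"

definition has_lambda :: "(real^'n^'n) set \<Rightarrow> real \<Rightarrow> bool" where
  "has_lambda Ms l \<longleftrightarrow> (\<exists>v. lambda_witness Ms l v)"

end

theory Submission
  imports Defs
begin


lemma norm_mv_le:
  fixes A :: "real^'n^'m"
  shows "norm (A *v x) \<le> (\<Sum>i\<in>UNIV. \<Sum>j\<in>UNIV. \<bar>A $ i $ j\<bar>) * norm x"
proof -
  have "norm (A *v x) \<le> (\<Sum>i\<in>UNIV. \<bar>(A *v x) $ i\<bar>)"
    by (rule norm_le_l1_cart)
  also have "\<dots> \<le> (\<Sum>i\<in>UNIV. \<Sum>j\<in>UNIV. \<bar>A $ i $ j\<bar> * norm x)"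
  proof (rule sum_mono)
    fix i
    have "\<bar>(A *v x) $ i\<bar> \<le> \<bar>\<Sum>j\<in>UNIV. A $ i $ j * x $ j\<bar>"
      by (simp add: matrix_vector_mult_def)
    also have "\<dots> \<le> (\<Sum>j\<in>UNIV. \<bar>A $ i $ j * x $ j\<bar>)"
      by (rule sum_abs)
    also have "\<dots> \<le> (\<Sum>j\<in>UNIV. \<bar>A $ i $ j\<bar> * norm x)"
      by (rule sum_mono) (simp add: abs_mult component_le_norm_cart mult_left_mono)
    finally show "\<bar>(A *v x) $ i\<bar> \<le> (\<Sum>j\<in>UNIV. \<bar>A $ i $ j\<bar> * norm x)" .
  qed
  finally show ?thesis
    by (simp add: sum_distrib_right)
qed

lemma bound_set:
  fixes Ms :: "(real^'n^'n) set"
  assumes "compact Ms"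
  obtains B where "B \<ge> 1" "\<And>a y. a \<in> Ms \<Longrightarrow> norm (a *v y) \<le> B * norm y"
proof -
  obtain B0 where B0: "\<And>a. a \<in> Ms \<Longrightarrow> norm a \<le> B0"
    using compact_imp_bounded[OF assms] by (auto simp: bounded_iff)
  define B where "B = real CARD('n) * real CARD('n) * \<bar>B0\<bar> + 1"
  have "B \<ge> 1" unfolding B_def by simp
  moreover have "norm (a *v y) \<le> B * norm y" if "a \<in> Ms" for a y
  proof -
    have "\<bar>a $ i $ j\<bar> \<le> \<bar>B0\<bar>" for i j
      using component_le_norm_cart[of "a $ i" j] Finite_Cartesian_Product.norm_nth_le[of a i] B0[OF that] by linarith
    then have "(\<Sum>i\<in>UNIV. \<Sum>j\<in>UNIV. \<bar>a $ i $ j\<bar>) \<le> (\<Sum>i\<in>(UNIV::'n set). \<Sum>j\<in>(UNIV::'n set). \<bar>B0\<bar>)"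
      by (intro sum_mono) auto
    also have "\<dots> \<le> B" unfolding B_def by simp
    finally have "(\<Sum>i\<in>UNIV. \<Sum>j\<in>UNIV. \<bar>a $ i $ j\<bar>) \<le> B" .
    then show ?thesis using norm_mv_le[of a y]
      by (meson mult_right_mono norm_ge_zero order_trans)
  qed
  ultimately show ?thesis using that by blast
qed

lemma adm_exp:
  fixes m :: "real^'n^'n"
  assumes "m \<in> Ms" "m *v x = r *s x" "t \<ge> 0"
  shows "admissible Ms t x (\<lambda>_. m) (\<lambda>s. exp (r * s) *\<^sub>R x)"
  unfolding admissible_def
proof (intro conjI ballI)
  show "(\<lambda>_. m) measurable_on {0..t}" by simp
  show "m \<in> Ms" by fact
  show "continuous_on {0..t} (\<lambda>s. exp (r * s) *\<^sub>R x)" by (intro continuous_intros)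
  fix s assume s: "s \<in> {0..t}"
  have eq: "m *v (exp (r * \<tau>) *\<^sub>R x) = (r * exp (r * \<tau>)) *\<^sub>R x" for \<tau>
    using assms(2) by (simp add: matrix_vector_mult_scaleR scalar_mult_eq_scaleR)
  have "((\<lambda>\<tau>. (r * exp (r * \<tau>)) *\<^sub>R x) has_integral (exp (r * s) *\<^sub>R x - exp (r * 0) *\<^sub>R x)) {0..s}"
    apply (rule fundamental_theorem_of_calculus)
    using s apply simp
    apply (auto intro!: derivative_eq_intros simp: has_vector_derivative_def)
    done
  then show "((\<lambda>\<tau>. m *v (exp (r * \<tau>) *\<^sub>R x)) has_integral (exp (r * s) *\<^sub>R x - x)) {0..s}"
    by (simp add: eq)
qed



lemma traj_bound:
  fixes Ms :: "(real^'n^'n) set"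
  assumes B: "\<And>a y. a \<in> Ms \<Longrightarrow> norm (a *v y) \<le> B * norm y" "B \<ge> 0"
    and adm: "admissible Ms t x M y" and t: "t \<ge> 0" "t * B \<le> 1/2"
  shows "norm (y t - x) \<le> 2 * t * B * norm x"
proof -
  have cont: "continuous_on {0..t} y" and Min: "\<forall>s\<in>{0..t}. M s \<in> Ms"
    and int: "\<forall>s\<in>{0..t}. ((\<lambda>\<tau>. M \<tau> *v y \<tau>) has_integral (y s - x)) {0..s}"
    using adm unfolding admissible_def by auto
  have "continuous_on {0..t} (\<lambda>s. norm (y s))"
    using cont by (intro continuous_intros)
  then obtain s0 where s0: "s0 \<in> {0..t}" and max: "\<And>s. s \<in> {0..t} \<Longrightarrow> norm (y s) \<le> norm (y s0)"
    using continuous_attains_sup[of "{0..t}" "\<lambda>s. norm (y s)"] t by auto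
  define R where "R = norm (y s0)"
  have R0: "R \<ge> 0" unfolding R_def by simp
  have gen: "norm (y s - x) \<le> B * R * s" if s: "s \<in> {0..t}" for s
  proof -
    have "((\<lambda>\<tau>. M \<tau> *v y \<tau>) has_integral (y s - x)) (cbox 0 s)"
      using int s by simp
    moreover have "\<forall>\<tau>\<in>cbox 0 s. norm (M \<tau> *v y \<tau>) \<le> B * R"
    proof
      fix \<tau> assume "\<tau> \<in> cbox 0 s"
      then have \<tau>: "\<tau> \<in> {0..t}" using s by auto
      have "norm (M \<tau> *v y \<tau>) \<le> B * norm (y \<tau>)" using B(1) Min \<tau> by blast
      also have "\<dots> \<le> B * R" unfolding R_def using max[OF \<tau>] B(2) by (simp add: mult_left_mono)
      finally show "norm (M \<tau> *v y \<tau>) \<le> B * R" .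
    qed
    ultimately have "norm (y s - x) \<le> B * R * Henstock_Kurzweil_Integration.content (cbox 0 s)"
      using has_integral_bound[of "B * R" "\<lambda>\<tau>. M \<tau> *v y \<tau>" "y s - x" 0 s] B(2) R0 by auto
    then show ?thesis using s by simp
  qed
  have "R \<le> norm x + B * R * s0"
    using gen[OF s0] norm_triangle_ineq2[of "y s0" x] unfolding R_def by linarith
  moreover have "B * R * s0 \<le> R / 2"
  proof -
    have "s0 * B \<le> 1/2" using s0 t B(2) by (meson atLeastAtMost_iff mult_right_mono order_trans)
    then have "R * (s0 * B) \<le> R * (1/2)" using R0 by (intro mult_left_mono) auto
    then show ?thesis by (simp add: algebra_simps)
  qed
  ultimately have R2: "R \<le> 2 * norm x" by linarith
  have "norm (y t - x) \<le> B * R * t" using gen t by auto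
  also have "\<dots> \<le> B * (2 * norm x) * t" using R2 B(2) t by (intro mult_right_mono mult_left_mono) auto
  finally show ?thesis by (simp add: algebra_simps)
qed


lemma dom_lemma:
  fixes m A :: "real^'n^'n" and x :: "real^'n"
  assumes Aij: "\<And>i j. A$i$j = m$i$j + (if i = j then c else 0)"
    and Anonneg: "\<And>i j. A$i$j \<ge> 0"
    and Axi: "\<And>i. (A *v x) $ i = \<rho> * x $ i"
    and xpos: "\<And>i. 0 < x$i"
    and eig: "is_eigenvalue m \<mu>"
  shows "Re \<mu> \<le> \<rho> - c"
proof -
  obtain z :: "complex^'n" where z0: "z \<noteq> 0" and ez: "cmat m *v z = \<mu> *s z"
    using eig unfolding is_eigenvalue_def by blast
  have ezi: "(\<Sum>j\<in>UNIV. complex_of_real (m$k$j) * z$j) = \<mu> * z$k" for k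
  proof -
    have "(cmat m *v z) $ k = (\<mu> *s z) $ k" using ez by simp
    then show ?thesis by (simp add: matrix_vector_mult_def cmat_def)
  qed
  have eA: "(\<Sum>j\<in>UNIV. complex_of_real (A$k$j) * z$j) = (\<mu> + complex_of_real c) * z$k" for k
  proof -
    have "(\<Sum>j\<in>UNIV. complex_of_real (A$k$j) * z$j)
        = (\<Sum>j\<in>UNIV. complex_of_real (m$k$j) * z$j + (if k = j then complex_of_real c * z$j else 0))"
      by (intro sum.cong) (auto simp: Aij distrib_right)
    also have "\<dots> = \<mu> * z$k + complex_of_real c * z$k"
      by (simp add: sum.distrib ezi)
    finally show ?thesis by (simp add: distrib_right)
  qed
  define q where "q j = cmod (z$j) / x$j" for j
  define Q where "Q = Max (range q)"
  have qle: "q j \<le> Q" for j unfolding Q_def by (rule Max_ge) auto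
  have "Q \<in> range q" unfolding Q_def by (rule Max_in) auto
  then obtain k where qk: "q k = Q" by auto
  obtain j0 where "z$j0 \<noteq> 0" using z0 by (auto simp: vec_eq_iff)
  then have "q j0 > 0" unfolding q_def using xpos[of j0] by simp
  then have Qpos: "Q > 0" using qle[of j0] by simp
  have zk: "cmod (z$k) = Q * x$k" using qk xpos[of k] unfolding q_def by (simp add: field_simps)
  have zkpos: "cmod (z$k) > 0" using zk Qpos xpos[of k] by simp
  have "cmod (\<mu> + complex_of_real c) * cmod (z$k) = cmod (\<Sum>j\<in>UNIV. complex_of_real (A$k$j) * z$j)"
    by (simp add: eA norm_mult)
  also have "\<dots> \<le> (\<Sum>j\<in>UNIV. cmod (complex_of_real (A$k$j) * z$j))" by (rule norm_sum)
  also have "\<dots> = (\<Sum>j\<in>UNIV. A$k$j * cmod (z$j))"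
    using Anonneg by (simp add: norm_mult)
  also have "\<dots> \<le> (\<Sum>j\<in>UNIV. A$k$j * (Q * x$j))"
  proof (rule sum_mono)
    fix j
    have "cmod (z$j) = q j * x$j" using xpos[of j] unfolding q_def by simp
    also have "\<dots> \<le> Q * x$j" by (rule mult_right_mono[OF qle less_imp_le[OF xpos]])
    finally show "A$k$j * cmod (z$j) \<le> A$k$j * (Q * x$j)"
      by (rule mult_left_mono[OF _ Anonneg])
  qed
  also have "\<dots> = Q * (\<Sum>j\<in>UNIV. A$k$j * x$j)"
    by (simp add: sum_distrib_left mult.left_commute)
  also have "\<dots> = Q * (A *v x) $ k"
    by (simp add: matrix_vector_mult_def)
  also have "\<dots> = \<rho> * cmod (z$k)" using Axi[of k] zk by simp
  finally have "cmod (\<mu> + complex_of_real c) * cmod (z$k) \<le> \<rho> * cmod (z$k)" .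
  then have "cmod (\<mu> + complex_of_real c) \<le> \<rho>" using zkpos by (rule mult_right_le_imp_le)
  moreover have "Re (\<mu> + complex_of_real c) \<le> cmod (\<mu> + complex_of_real c)" by (rule complex_Re_le_cmod)
  ultimately show ?thesis by simp
qed



lemma perron:
  fixes m :: "real^'n^'n"
  assumes met: "metzler m" and irr: "irreducible_mat m"
  shows "\<exists>r x. (\<forall>i. 0 < x$i) \<and> m *v x = r *s x \<and> (\<forall>\<mu>. is_eigenvalue m \<mu> \<longrightarrow> Re \<mu> \<le> r)"
proof -
  define c where "c = (\<Sum>i\<in>UNIV. \<bar>m$i$i\<bar>) + 1"
  define A :: "real^'n^'n" where "A = (\<chi> i j. m$i$j + (if i = j then c else 0))"
  have Aij: "A$i$j = m$i$j + (if i = j then c else 0)" for i j unfolding A_def by simp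
  have diag: "A$i$i \<ge> 1" for i
  proof -
    have "\<bar>m$i$i\<bar> \<le> (\<Sum>i\<in>UNIV. \<bar>m$i$i\<bar>)" by (rule member_le_sum) auto
    then show ?thesis unfolding Aij c_def by simp
  qed
  have Anonneg: "A$i$j \<ge> 0" for i j
  proof (cases "i = j")
    case True then show ?thesis using diag[of i] by simp
  next
    case False then show ?thesis using met unfolding metzler_def Aij by simp
  qed
  have Av: "(A *v x) $ i = (m *v x) $ i + c * x $ i" for x i
  proof -
    have "(A *v x) $ i = (\<Sum>j\<in>UNIV. m$i$j * x$j + (if i = j then c * x$j else 0))"
      unfolding matrix_vector_mult_def by (simp, intro sum.cong) (auto simp: Aij distrib_right)
    also have "\<dots> = (m *v x) $ i + c * x $ i"
      by (simp add: sum.distrib matrix_vector_mult_def)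
    finally show ?thesis .
  qed
  define S :: "(real^'n) set" where "S = {x. (\<forall>i. 0 \<le> x$i) \<and> (\<Sum>i\<in>UNIV. x$i) = 1}"
  have Axge: "(A *v x) $ i \<ge> x $ i" if "\<forall>i. 0 \<le> x$i" for x i
  proof -
    have "x $ i \<le> A$i$i * x$i" using diag[of i] that
      by (metis mult_le_cancel_right1 not_le order_less_le_trans)
    also have "\<dots> \<le> (\<Sum>j\<in>UNIV. A$i$j * x$j)"
      by (rule member_le_sum[where f = "\<lambda>j. A$i$j * x$j"]) (use Anonneg that in auto)
    finally show ?thesis by (simp add: matrix_vector_mult_def)
  qed
  define s where "s x = (\<Sum>i\<in>UNIV. (A *v x) $ i)" for x
  have sge: "s x \<ge> 1" if "x \<in> S" for x
  proof -
    have "1 = (\<Sum>i\<in>UNIV. x$i)" using that unfolding S_def by simp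
    also have "\<dots> \<le> s x" unfolding s_def by (rule sum_mono) (use Axge that S_def in auto)
    finally show ?thesis .
  qed
  define f where "f x = (1 / s x) *\<^sub>R (A *v x)" for x
  have closedS: "closed S"
    unfolding S_def
    by (intro closed_Collect_conj closed_Collect_all closed_Collect_le closed_Collect_eq continuous_intros)
  have bddS: "bounded S"
  proof -
    have "norm x \<le> 1" if "x \<in> S" for x
    proof -
      have "norm x \<le> (\<Sum>i\<in>UNIV. \<bar>x$i\<bar>)" by (rule norm_le_l1_cart)
      also have "\<dots> = 1" using that unfolding S_def by simp
      finally show ?thesis .
    qed
    then show ?thesis unfolding bounded_iff by blast
  qed
  have compS: "compact S" using closedS bddS by (simp add: compact_eq_bounded_closed)
  have convS: "convex S"
    unfolding convex_def S_def
    by (auto simp: sum.distrib sum_distrib_left[symmetric])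
  have neS: "S \<noteq> {}"
  proof -
    have "(\<chi> i. 1 / real CARD('n)) \<in> S" unfolding S_def by simp
    then show ?thesis by blast
  qed
  have contf: "continuous_on S f"
    unfolding f_def s_def
    using sge unfolding s_def
    by (intro continuous_intros) (metis not_one_le_zero)+
  have fS: "f \<in> S \<rightarrow> S"
  proof
    fix x assume x: "x \<in> S"
    have nn: "\<forall>i. 0 \<le> x$i" using x unfolding S_def by simp
    have "0 \<le> (f x) $ i" for i
      unfolding f_def using sge[OF x] Axge[OF nn, of i] nn[rule_format, of i] by simp
    moreover have "(\<Sum>i\<in>UNIV. (f x)$i) = 1"
    proof -
      have "(\<Sum>i\<in>UNIV. (f x)$i) = (\<Sum>i\<in>UNIV. (A *v x)$i / s x)" unfolding f_def by simp
      also have "\<dots> = s x / s x" unfolding sum_divide_distrib[symmetric] s_def ..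
      also have "\<dots> = 1" using sge[OF x] by simp
      finally show ?thesis .
    qed
    ultimately show "f x \<in> S" unfolding S_def by simp
  qed
  obtain x where xS: "x \<in> S" and fx: "f x = x" using brouwer[OF compS convS neS contf fS] by blast
  define \<rho> where "\<rho> = s x"
  have \<rho>1: "\<rho> \<ge> 1" unfolding \<rho>_def using sge[OF xS] .
  have Ax: "A *v x = \<rho> *\<^sub>R x"
  proof -
    have "\<rho> *\<^sub>R f x = A *v x" unfolding f_def \<rho>_def using sge[OF xS] by simp
    then show ?thesis using fx by simp
  qed
  have Axi: "(A *v x) $ i = \<rho> * x $ i" for i using Ax by simp
  have xnn: "0 \<le> x$i" for i using xS unfolding S_def by simp
  have xpos: "0 < x$i" for i
  proof (rule ccontr)
    assume "\<not> 0 < x$i"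
    then have xi0: "x$i = 0" using xnn[of i] by simp
    define I where "I = {i. x$i = 0}"
    define J where "J = {i. x$i \<noteq> 0}"
    have "I \<noteq> {}" using xi0 unfolding I_def by blast
    moreover have "J \<noteq> {}"
    proof
      assume "J = {}"
      then have "\<forall>i. x$i = 0" unfolding J_def by blast
      then show False using xS unfolding S_def by simp
    qed
    moreover have "I \<inter> J = {}" "I \<union> J = UNIV" unfolding I_def J_def by auto
    ultimately obtain a b where a: "a \<in> I" and b: "b \<in> J" and mab: "0 < m$a$b"
      using irr unfolding irreducible_mat_def by blast
    have ab: "a \<noteq> b" using a b unfolding I_def J_def by auto
    have xb: "0 < x$b" using b xnn[of b] unfolding J_def by auto
    have "0 < A$a$b * x$b" using mab ab xb unfolding Aij by simp
    also have "\<dots> \<le> (\<Sum>j\<in>UNIV. A$a$j * x$j)"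
      by (rule member_le_sum[where f = "\<lambda>j. A$a$j * x$j"]) (use Anonneg xnn in auto)
    also have "\<dots> = \<rho> * x$a" using Axi[of a] by (simp add: matrix_vector_mult_def)
    also have "\<dots> = 0" using a unfolding I_def by simp
    finally show False by simp
  qed
  have mxi: "(m *v x)$i = (\<rho> - c) * x$i" for i
    using Av[of x i] Axi[of i] by (simp add: left_diff_distrib)
  have mx: "m *v x = (\<rho> - c) *s x"
    by (simp add: vec_eq_iff mxi left_diff_distrib)
  have dom: "Re \<mu> \<le> \<rho> - c" if "is_eigenvalue m \<mu>" for \<mu>
    by (rule dom_lemma[OF Aij Anonneg Axi xpos that])
  show ?thesis using xpos mx dom by blast
qed



theorem proposition1:
  fixes Ms :: "(real^'n^'n) set" and m :: "real^'n^'n" and l :: real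
  assumes "compact Ms" and "convex Ms"
    and "\<forall>a\<in>Ms. metzler a \<and> irreducible_mat a"
    and "m \<in> Ms"
    and "has_lambda Ms l"
  shows "perron_root m \<le> l"
proof -
  obtain r x where xpos: "\<And>i. 0 < x$i" and mx: "m *v x = r *s x"
    and dom: "\<And>\<mu>. is_eigenvalue m \<mu> \<Longrightarrow> Re \<mu> \<le> r"
    using perron[of m] assms(3,4) by blast
  have eig: "is_eigenvalue m (complex_of_real r)"
    unfolding is_eigenvalue_def
  proof (intro exI conjI)
    let ?w = "\<chi> i. complex_of_real (x$i)"
    show "?w \<noteq> 0"
    proof
      assume "?w = 0"
      then have "?w $ undefined = 0" by simp
      then show False using xpos[of undefined] by simp
    qed
    show "cmat m *v ?w = complex_of_real r *s ?w"
    proof (subst vec_eq_iff, intro allI)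
      fix i
      have "(m *v x) $ i = (r *s x) $ i" using mx by simp
      then have e: "(\<Sum>j\<in>UNIV. m $ i $ j * x $ j) = r * x $ i"
        by (simp add: matrix_vector_mult_def)
      have "(cmat m *v ?w) $ i = complex_of_real (\<Sum>j\<in>UNIV. m $ i $ j * x $ j)"
        by (simp add: cmat_def matrix_vector_mult_def of_real_sum)
      also have "\<dots> = (complex_of_real r *s ?w) $ i" by (simp add: e)
      finally show "(cmat m *v ?w) $ i = (complex_of_real r *s ?w) $ i" .
    qed
  qed
  have pr: "perron_root m = r"
    unfolding perron_root_def
  proof (rule the_equality)
    show "is_eigenvalue m (complex_of_real r) \<and> (\<forall>\<mu>. is_eigenvalue m \<mu> \<longrightarrow> Re \<mu> \<le> r)"
      using eig dom by blast
    fix r' assume "is_eigenvalue m (complex_of_real r') \<and> (\<forall>\<mu>. is_eigenvalue m \<mu> \<longrightarrow> Re \<mu> \<le> r')"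
    then show "r' = r" using dom eig by force
  qed
  obtain v where v: "lambda_witness Ms l v" using assms(5) unfolding has_lambda_def by blast
  obtain L where L: "\<And>a b. a \<in> orthant \<Longrightarrow> b \<in> orthant \<Longrightarrow> \<bar>v a - v b\<bar> \<le> L * norm (a - b)"
    using v unfolding lambda_witness_def by blast
  obtain B where B1: "B \<ge> 1" and B: "\<And>a y. a \<in> Ms \<Longrightarrow> norm (a *v y) \<le> B * norm y"
    using bound_set[OF assms(1)] by blast
  define \<delta> where "\<delta> = Min (range (\<lambda>i. x$i))"
  have \<delta>le: "\<delta> \<le> x$i" for i unfolding \<delta>_def by (rule Min_le) auto
  have \<delta>pos: "\<delta> > 0" unfolding \<delta>_def using Min_in[of "range (\<lambda>i. x$i)"] xpos by auto
  have xK: "x \<in> orthant" using xpos unfolding orthant_def by (auto intro: less_imp_le)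
  have vx: "v x > 0"
  proof -
    have "x \<noteq> 0" using xpos[of undefined] by auto
    then show ?thesis using v xK unfolding lambda_witness_def by blast
  qed
  define t where "t = min (1/(2*B)) (\<delta>/(4*B*(norm x+1)))"
  have den: "0 < 4*B*(norm x+1)" using B1 by (intro mult_pos_pos) (auto intro: add_nonneg_pos)
  have tpos: "t > 0" unfolding t_def using B1 \<delta>pos den by auto
  have tB: "t * B \<le> 1/2"
  proof -
    have "t \<le> 1/(2*B)" unfolding t_def by simp
    then have "t * B \<le> 1/(2*B) * B" using B1 by (intro mult_right_mono) auto
    then show ?thesis using B1 by simp
  qed
  have tsmall: "2 * t * B * norm x < \<delta>"
  proof -
    have "t \<le> \<delta>/(4*B*(norm x+1))" unfolding t_def by simp
    then have h: "t * (4*B*(norm x+1)) \<le> \<delta>" using den by (simp add: pos_le_divide_eq)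
    have "2 * t * B * norm x \<le> 2 * t * B * (norm x + 1)"
      using tpos B1 by (intro mult_left_mono) auto
    also have "\<dots> = t * (4*B*(norm x+1)) / 2" by (simp add: algebra_simps)
    also have "\<dots> < \<delta>" using h \<delta>pos by linarith
    finally show ?thesis .
  qed
  let ?A = "{(M, y). admissible Ms t x M y}"
  have bdd: "bdd_above ((\<lambda>p. v (snd p t)) ` ?A)"
  proof (rule bdd_aboveI2)
    fix p assume "p \<in> ?A"
    then obtain M y where p: "p = (M, y)" and adm: "admissible Ms t x M y" by auto
    have d: "norm (y t - x) < \<delta>"
      using traj_bound[OF B _ adm] B1 tpos tB tsmall by auto
    have "y t \<in> orthant"
      unfolding orthant_def
    proof (intro CollectI allI)
      fix i
      have "\<bar>(y t - x) $ i\<bar> \<le> norm (y t - x)" by (rule component_le_norm_cart)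
      then show "0 \<le> y t $ i" using d \<delta>le[of i] by auto
    qed
    then have "\<bar>v (y t) - v x\<bar> \<le> L * norm (y t - x)" using L xK by blast
    also have "\<dots> \<le> \<bar>L\<bar> * \<delta>" using d
      by (metis abs_ge_self abs_mult_pos' less_eq_real_def mult_mono norm_ge_zero order_trans abs_ge_zero)
    finally show "v (snd p t) \<le> v x + \<bar>L\<bar> * \<delta>" using p by simp
  qed
  have mem: "(\<lambda>_. m, \<lambda>s. exp (r * s) *\<^sub>R x) \<in> ?A"
    using adm_exp[OF assms(4) mx, of t] tpos by simp
  have "exp (r * t) * v x = v (exp (r * t) *\<^sub>R x)"
    using v xK unfolding lambda_witness_def by simp
  also have "\<dots> \<le> (SUP p \<in> ?A. v (snd p t))"
    using cSUP_upper[OF mem bdd] by simp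
  also have "\<dots> = exp (l * t) * v x"
    using v xK tpos unfolding lambda_witness_def by simp
  finally have "exp (r * t) \<le> exp (l * t)" using vx by simp
  then have "r * t \<le> l * t" by simp
  then have "r \<le> l" using tpos by simp
  then show ?thesis using pr by simp
qed

end
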